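(* Let $n\ge1$ and $y=(y_1,\dots,y_{2n})\in\mathbb Z^{2n}$ with $y_1<y_2<\dots<y_{2n}$. Then for every $\eta\in\{0,1\}^{\mathbb Z}$, \[ \mathcal L\,\Sigma_y(\eta)=\sum_{i=1}^{2n}L_{y_i}\Sigma_y(\eta), \] where $L_{y_i}$ denotes the operator $L$ acting on the variable $y_i$ of $y\mapsto\Sigma_y(\eta)$.
   Context: Fix $\theta\in[0,1]$ and uniformly bounded nonnegative rates $(p_x,q_x)_{x\in\mathbb Z}$. $\mathcal L$ is the generator acting on $F:\{0,1\}^{\mathbb Z}\to\mathbb R$ depending on finitely many coordinates by $\mathcal L F(\eta)=\sum_{x}q_x\big(\theta F(\eta^a_{x,x-1})+(1-\theta)F(\eta^c_{x,x-1})-F(\eta)\big)+\sum_x p_x\big(\theta F(\eta^a_{x-1,x})+(1-\theta)F(\eta^c_{x-1,x})-F(\eta)\big)$, where for $x\ne y$, $\eta^a_{x,y},\eta^c_{x,y}$ agree with $\eta$ off $\{x,y\}$, vanish at $x$, and $\eta^a_{x,y}(y)=(\eta(x)+\eta(y))\bmod2$, $\eta^c_{x,y}(y)=\min\{1,\eta(x)+\eta(y)\}$. The one-particle operator is $Lf(x)=q_xD^+f(x)+p_xD^-f(x)$ for $f:\mathbb Z\to\mathbb R$, where $D^+f(x)=f(x+1)-f(x)$, $D^-f(x)=f(x-1)-f(x)$. For $y\le z$, $\eta[y,z)=\sum_{y\le x<z}\eta(x)$ ($=0$ if $y=z$), $\sigma_{y,z}(\eta)=(-\theta)^{\eta[y,z)}$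 with $0^0=1$, and for $y_1\le\dots\le y_{2n}$, $\Sigma_y(\eta)=\prod_{i=1}^n\sigma_{y_{2i-1},y_{2i}}(\eta)$. *)

theory Defs
  imports "HOL-Analysis.Analysis"
begin

text \<open>Configurations \<eta> in {0,1}^Z are represented as int \<Rightarrow> bool (True = 1).\<close>

type_synonym config = "int \<Rightarrow> bool"

text \<open>eta^a_{x,y}: vanishes at x, y-value is (eta x + eta y) mod 2.\<close>
definition etaA :: "config \<Rightarrow> int \<Rightarrow> int \<Rightarrow> config" where
  "etaA \<eta> x y = \<eta>(x := False, y := (\<eta> x \<noteq> \<eta> y))"

text \<open>eta^c_{x,y}: vanishes at x, y-value is min 1 (eta x + eta y).\<close>
definition etaC :: "config \<Rightarrow> int \<Rightarrow> int \<Rightarrow> config" where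
  "etaC \<eta> x y = \<eta>(x := False, y := (\<eta> x \<or> \<eta> y))"

text \<open>The generator on local functions F (the sums over Z have finite support for local F).\<close>
definition gen :: "real \<Rightarrow> (int \<Rightarrow> real) \<Rightarrow> (int \<Rightarrow> real) \<Rightarrow> (config \<Rightarrow> real) \<Rightarrow> config \<Rightarrow> real" where
  "gen \<theta> p q F \<eta> =
     (\<Sum>\<^sub>\<infinity>x\<in>(UNIV::int set). q x * (\<theta> * F (etaA \<eta> x (x - 1)) + (1 - \<theta>) * F (etaC \<eta> x (x - 1)) - F \<eta>))
   + (\<Sum>\<^sub>\<infinity>x\<in>(UNIV::int set). p x * (\<theta> * F (etaA \<eta> (x - 1) x) + (1 - \<theta>) * F (etaC \<eta> (x - 1) x) - F \<eta>))"

definition cnt :: "config \<Rightarrow> int \<Rightarrow> int \<Rightarrow> nat" where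
  "cnt \<eta> y z = (\<Sum>x\<in>{y..<z}. if \<eta> x then 1 else 0)"

definition sigma :: "real \<Rightarrow> int \<Rightarrow> int \<Rightarrow> config \<Rightarrow> real" where
  "sigma \<theta> y z \<eta> = (- \<theta>) ^ cnt \<eta> y z"

text \<open>y = (y_1,...,y_{2n}) is represented as y :: nat \<Rightarrow> int, using indices 1..2n.\<close>
definition Sigma :: "real \<Rightarrow> nat \<Rightarrow> (nat \<Rightarrow> int) \<Rightarrow> config \<Rightarrow> real" where
  "Sigma \<theta> n y \<eta> = (\<Prod>i\<in>{1..n}. sigma \<theta> (y (2*i - 1)) (y (2*i)) \<eta>)"

definition Lvar :: "(int \<Rightarrow> real) \<Rightarrow> (int \<Rightarrow> real) \<Rightarrow> nat \<Rightarrow> ((nat \<Rightarrow> int) \<Rightarrow> real) \<Rightarrow> (nat \<Rightarrow> int) \<Rightarrow> real" where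
  "Lvar p q i G y = q (y i) * (G (y(i := y i + 1)) - G y) + p (y i) * (G (y(i := y i - 1)) - G y)"

end

theory Submission imports Defs begin

lemma cnt_cong: "(\<And>z. a \<le> z \<Longrightarrow> z < b \<Longrightarrow> \<eta> z = \<eta>' z) \<Longrightarrow> cnt \<eta> a b = cnt \<eta>' a b"
  unfolding cnt_def by (rule sum.cong) auto

lemma cnt_split: "a \<le> c \<Longrightarrow> c \<le> b \<Longrightarrow> cnt \<eta> a b = cnt \<eta> a c + cnt \<eta> c b"
proof -
  assume h: "a \<le> c" "c \<le> b"
  have "{a..<b} = {a..<c} \<union> {c..<b}" using h by auto
  thus ?thesis unfolding cnt_def by (simp add: sum.union_disjoint ivl_disj_int)
qed

lemma cnt_single: "cnt \<eta> c (c+1) = (if \<eta> c then 1 else 0)"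
proof -
  have "{c..<c+1} = {c}" by auto
  thus ?thesis unfolding cnt_def by simp
qed

lemma cnt_single': "cnt \<eta> (c-1) c = (if \<eta> (c-1) then 1 else 0)"
  using cnt_single[of \<eta> "c-1"] by simp

lemma one_q:
  fixes \<theta> :: real
  assumes ab: "a < b"
  shows "\<theta> * sigma \<theta> a b (etaA \<eta> x (x-1)) + (1-\<theta>) * sigma \<theta> a b (etaC \<eta> x (x-1)) - sigma \<theta> a b \<eta>
     = (if x = a then sigma \<theta> (a+1) b \<eta> - sigma \<theta> a b \<eta> else 0)
     + (if x = b then sigma \<theta> a (b+1) \<eta> - sigma \<theta> a b \<eta> else 0)"
proof -
  consider "x < a \<or> x > b" | "x = a" | "a < x \<and> x < b" | "x = b" by linarith
  then show ?thesis
  proof cases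
    case 1
    have "cnt (etaA \<eta> x (x-1)) a b = cnt \<eta> a b" "cnt (etaC \<eta> x (x-1)) a b = cnt \<eta> a b"
      using 1 by (auto intro!: cnt_cong simp: etaA_def etaC_def)
    moreover have "x \<noteq> a" "x \<noteq> b" using 1 ab by auto
    ultimately show ?thesis by (simp add: sigma_def algebra_simps)
  next
    case 2
    have "cnt (etaA \<eta> x (x-1)) a b = cnt \<eta> (a+1) b" "cnt (etaC \<eta> x (x-1)) a b = cnt \<eta> (a+1) b"
      using 2 ab
      by (subst cnt_split[of a "a+1"], simp, simp, simp add: cnt_single etaA_def etaC_def,
          auto intro!: cnt_cong simp: etaA_def etaC_def)+
    then show ?thesis using 2 ab by (simp add: sigma_def algebra_simps)
  next
    case 3
    define r where "r = cnt \<eta> a (x-1) + cnt \<eta> (x+1) b"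
    have e0: "cnt \<eta> a b = r + (if \<eta> (x-1) then 1 else 0) + (if \<eta> x then 1 else 0)"
      using 3 unfolding r_def
      by (simp add: cnt_split[of a "x-1" b] cnt_split[of "x-1" x b] cnt_split[of x "x+1" b] cnt_single cnt_single')
    have gen: "cnt \<eta>' a b = r + (if \<eta>' (x-1) then 1 else 0) + (if \<eta>' x then 1 else 0)"
      if "\<And>z. z \<noteq> x \<Longrightarrow> z \<noteq> x - 1 \<Longrightarrow> \<eta>' z = \<eta> z" for \<eta>'
    proof -
      have "cnt \<eta>' a (x-1) = cnt \<eta> a (x-1)" "cnt \<eta>' (x+1) b = cnt \<eta> (x+1) b"
        by (auto intro!: cnt_cong that)
      thus ?thesis using 3 unfolding r_def
        by (simp add: cnt_split[of a "x-1" b] cnt_split[of "x-1" x b] cnt_split[of x "x+1" b] cnt_single cnt_single')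
    qed
    have eA: "cnt (etaA \<eta> x (x-1)) a b = r + (if \<eta> x \<noteq> \<eta> (x-1) then 1 else 0)"
      by (subst gen) (auto simp: etaA_def)
    have eC: "cnt (etaC \<eta> x (x-1)) a b = r + (if \<eta> x \<or> \<eta> (x-1) then 1 else 0)"
      by (subst gen) (auto simp: etaC_def)
    show ?thesis using 3 unfolding sigma_def eA eC e0
      by (cases "\<eta> x"; cases "\<eta> (x-1)") (simp_all add: power_add algebra_simps power2_eq_square)
  next
    case 4
    define r where "r = cnt \<eta> a (x-1)"
    have e0: "cnt \<eta> a b = r + (if \<eta> (x-1) then 1 else 0)"
      using 4 ab unfolding r_def by (simp add: cnt_split[of a "x-1" b] cnt_single')
    have e1: "cnt \<eta> a (b+1) = cnt \<eta> a b + (if \<eta> x then 1 else 0)"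
      using 4 ab by (simp add: cnt_split[of a b "b+1"] cnt_single)
    have gen: "cnt \<eta>' a b = r + (if \<eta>' (x-1) then 1 else 0)"
      if "\<And>z. z \<noteq> x \<Longrightarrow> z \<noteq> x - 1 \<Longrightarrow> \<eta>' z = \<eta> z" for \<eta>'
    proof -
      have "cnt \<eta>' a (x-1) = cnt \<eta> a (x-1)"
        by (auto intro!: cnt_cong that)
      thus ?thesis using 4 ab unfolding r_def
        by (simp add: cnt_split[of a "x-1" b] cnt_single')
    qed
    have eA: "cnt (etaA \<eta> x (x-1)) a b = r + (if \<eta> x \<noteq> \<eta> (x-1) then 1 else 0)"
      by (subst gen) (auto simp: etaA_def)
    have eC: "cnt (etaC \<eta> x (x-1)) a b = r + (if \<eta> x \<or> \<eta> (x-1) then 1 else 0)"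
      by (subst gen) (auto simp: etaC_def)
    show ?thesis using 4 ab unfolding sigma_def eA eC e1 e0
      by (cases "\<eta> x"; cases "\<eta> (x-1)") (simp_all add: power_add algebra_simps power2_eq_square)
  qed
qed

lemma one_p:
  fixes \<theta> :: real
  assumes ab: "a < b"
  shows "\<theta> * sigma \<theta> a b (etaA \<eta> (x-1) x) + (1-\<theta>) * sigma \<theta> a b (etaC \<eta> (x-1) x) - sigma \<theta> a b \<eta>
     = (if x = a then sigma \<theta> (a-1) b \<eta> - sigma \<theta> a b \<eta> else 0)
     + (if x = b then sigma \<theta> a (b-1) \<eta> - sigma \<theta> a b \<eta> else 0)"
proof -
  consider "x < a \<or> x > b" | "x = a" | "a < x \<and> x < b" | "x = b" by linarith
  then show ?thesis
  proof cases
    case 1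
    have "cnt (etaA \<eta> (x-1) x) a b = cnt \<eta> a b" "cnt (etaC \<eta> (x-1) x) a b = cnt \<eta> a b"
      using 1 by (auto intro!: cnt_cong simp: etaA_def etaC_def)
    moreover have "x \<noteq> a" "x \<noteq> b" using 1 ab by auto
    ultimately show ?thesis by (simp add: sigma_def algebra_simps)
  next
    case 4
    have "cnt (etaA \<eta> (x-1) x) a b = cnt \<eta> a (b-1)" "cnt (etaC \<eta> (x-1) x) a b = cnt \<eta> a (b-1)"
      using 4 ab
      by (subst cnt_split[of a "b-1"], simp, simp, simp add: cnt_single' etaA_def etaC_def,
          auto intro!: cnt_cong simp: etaA_def etaC_def)+
    then show ?thesis using 4 ab by (simp add: sigma_def algebra_simps)
  next
    case 3
    define r where "r = cnt \<eta> a (x-1) + cnt \<eta> (x+1) b"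
    have e0: "cnt \<eta> a b = r + (if \<eta> (x-1) then 1 else 0) + (if \<eta> x then 1 else 0)"
      using 3 unfolding r_def
      by (simp add: cnt_split[of a "x-1" b] cnt_split[of "x-1" x b] cnt_split[of x "x+1" b] cnt_single cnt_single')
    have gen: "cnt \<eta>' a b = r + (if \<eta>' (x-1) then 1 else 0) + (if \<eta>' x then 1 else 0)"
      if "\<And>z. z \<noteq> x \<Longrightarrow> z \<noteq> x - 1 \<Longrightarrow> \<eta>' z = \<eta> z" for \<eta>'
    proof -
      have "cnt \<eta>' a (x-1) = cnt \<eta> a (x-1)" "cnt \<eta>' (x+1) b = cnt \<eta> (x+1) b"
        by (auto intro!: cnt_cong that)
      thus ?thesis using 3 unfolding r_def
        by (simp add: cnt_split[of a "x-1" b] cnt_split[of "x-1" x b] cnt_split[of x "x+1" b] cnt_single cnt_single')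
    qed
    have eA: "cnt (etaA \<eta> (x-1) x) a b = r + (if \<eta> x \<noteq> \<eta> (x-1) then 1 else 0)"
      by (subst gen) (auto simp: etaA_def)
    have eC: "cnt (etaC \<eta> (x-1) x) a b = r + (if \<eta> x \<or> \<eta> (x-1) then 1 else 0)"
      by (subst gen) (auto simp: etaC_def)
    show ?thesis using 3 unfolding sigma_def eA eC e0
      by (cases "\<eta> x"; cases "\<eta> (x-1)") (simp_all add: power_add algebra_simps power2_eq_square)
  next
    case 2
    define r where "r = cnt \<eta> (x+1) b"
    have e0: "cnt \<eta> a b = r + (if \<eta> x then 1 else 0)"
      using 2 ab unfolding r_def by (simp add: cnt_split[of a "a+1" b] cnt_single)
    have e1: "cnt \<eta> (a-1) b = cnt \<eta> a b + (if \<eta> (x-1) then 1 else 0)"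
      using 2 ab by (simp add: cnt_split[of "a-1" a b] cnt_single')
    have gen: "cnt \<eta>' a b = r + (if \<eta>' x then 1 else 0)"
      if "\<And>z. z \<noteq> x \<Longrightarrow> z \<noteq> x - 1 \<Longrightarrow> \<eta>' z = \<eta> z" for \<eta>'
    proof -
      have "cnt \<eta>' (x+1) b = cnt \<eta> (x+1) b"
        by (auto intro!: cnt_cong that)
      thus ?thesis using 2 ab unfolding r_def
        by (simp add: cnt_split[of a "a+1" b] cnt_single)
    qed
    have eA: "cnt (etaA \<eta> (x-1) x) a b = r + (if \<eta> x \<noteq> \<eta> (x-1) then 1 else 0)"
      by (subst gen) (auto simp: etaA_def)
    have eC: "cnt (etaC \<eta> (x-1) x) a b = r + (if \<eta> x \<or> \<eta> (x-1) then 1 else 0)"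
      by (subst gen) (auto simp: etaC_def)
    show ?thesis using 2 ab unfolding sigma_def eA eC e1 e0
      by (cases "\<eta> x"; cases "\<eta> (x-1)") (simp_all add: power_add algebra_simps power2_eq_square)
  qed
qed

lemma prod_combo:
  fixes gZ gA gB D :: "nat \<Rightarrow> real" and \<theta> :: real
  assumes fin: "finite A"
    and un: "\<And>j. j \<in> A \<Longrightarrow> \<not> P j \<Longrightarrow> gA j = gZ j \<and> gB j = gZ j"
    and uniq: "\<And>i j. i \<in> A \<Longrightarrow> j \<in> A \<Longrightarrow> P i \<Longrightarrow> P j \<Longrightarrow> i = j"
    and D: "\<And>i. i \<in> A \<Longrightarrow> \<theta> * gA i + (1-\<theta>) * gB i - gZ i = D i"
  shows "\<theta> * prod gA A + (1-\<theta>) * prod gB A - prod gZ A = (\<Sum>i\<in>A. prod gZ (A-{i}) * D i)"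
proof (cases "\<exists>i\<in>A. P i")
  case True
  then obtain i where i: "i \<in> A" "P i" by blast
  have oth: "j \<in> A - {i} \<Longrightarrow> gA j = gZ j \<and> gB j = gZ j" for j
    using un uniq i by blast
  have Dz: "j \<in> A - {i} \<Longrightarrow> D j = 0" for j
  proof -
    assume j: "j \<in> A - {i}"
    have "D j = \<theta> * gA j + (1-\<theta>) * gB j - gZ j" using D j by auto
    also have "\<dots> = 0" using oth[OF j] by (simp add: algebra_simps)
    finally show ?thesis .
  qed
  have "prod gA (A-{i}) = prod gZ (A-{i})" "prod gB (A-{i}) = prod gZ (A-{i})"
    using oth by (auto intro!: prod.cong)
  then have p1: "prod gA A = gA i * prod gZ (A-{i})" and p2: "prod gB A = gB i * prod gZ (A-{i})"
    using fin i by (simp_all add: prod.remove[of A i])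
  have p0: "prod gZ A = gZ i * prod gZ (A-{i})"
    using fin i by (simp add: prod.remove[of A i])
  have s: "(\<Sum>j\<in>A. prod gZ (A-{j}) * D j) = prod gZ (A-{i}) * D i"
  proof -
    have "(\<Sum>j\<in>A. prod gZ (A-{j}) * D j) = prod gZ (A-{i}) * D i + (\<Sum>j\<in>A-{i}. prod gZ (A-{j}) * D j)"
      using fin i by (simp add: sum.remove[of A i])
    moreover have "(\<Sum>j\<in>A-{i}. prod gZ (A-{j}) * D j) = 0"
      by (rule sum.neutral) (use Dz in auto)
    ultimately show ?thesis by simp
  qed
  have "\<theta> * (gA i * prod gZ (A-{i})) + (1-\<theta>) * (gB i * prod gZ (A-{i})) - gZ i * prod gZ (A-{i})
     = (\<theta> * gA i + (1-\<theta>) * gB i - gZ i) * prod gZ (A-{i})" by (simp add: algebra_simps)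
  then show ?thesis unfolding s p0 p1 p2 using D[OF i(1)] by simp
next
  case False
  then have e: "j \<in> A \<Longrightarrow> gA j = gZ j \<and> gB j = gZ j" for j using un by blast
  have "prod gA A = prod gZ A" "prod gB A = prod gZ A" using e by (auto intro!: prod.cong)
  moreover have "(\<Sum>j\<in>A. prod gZ (A-{j}) * D j) = 0"
    by (rule sum.neutral) (use e D in \<open>auto simp: algebra_simps\<close>)
  ultimately show ?thesis by (simp add: algebra_simps)
qed

lemma prod_change1:
  fixes g h :: "nat \<Rightarrow> real"
  assumes "finite A" "i \<in> A" "\<And>j. j \<in> A - {i} \<Longrightarrow> g j = h j"
  shows "prod g A - prod h A = prod h (A-{i}) * (g i - h i)"
proof -
  have "prod g (A-{i}) = prod h (A-{i})" using assms(3) by (auto intro!: prod.cong)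
  then have "prod g A = g i * prod h (A-{i})"
    using assms by (simp add: prod.remove[of A i])
  moreover have "prod h A = h i * prod h (A-{i})"
    using assms by (simp add: prod.remove[of A i])
  ultimately show ?thesis by (simp add: algebra_simps)
qed

lemma y_less:
  fixes y :: "nat \<Rightarrow> int" and i j N :: nat
  assumes "\<And>i. 1 \<le> i \<Longrightarrow> i < N \<Longrightarrow> y i < y (Suc i)"
  shows "1 \<le> i \<Longrightarrow> i < j \<Longrightarrow> j \<le> N \<Longrightarrow> y i < y j"
proof (induct j rule: nat.induct)
  case zero then show ?case by simp
next
  case (Suc j)
  show ?case
  proof (cases "i = j")
    case True then show ?thesis using assms Suc.prems by auto
  next
    case False
    then have "y i < y j" using Suc by auto
    moreover have "y j < y (Suc j)" using assms Suc.prems False by auto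
    ultimately show ?thesis by simp
  qed
qed

lemma sum_pairs: "(\<Sum>k\<in>{1..2*(n::nat)}. (f::nat\<Rightarrow>real) k) = (\<Sum>i\<in>{1..n}. (f (2*i-1) + f (2*i)) :: real)"
proof (induction n)
  case 0 then show ?case by simp
next
  case (Suc n)
  have "{1..2*Suc n} = insert (Suc (Suc (2*n))) (insert (Suc (2*n)) {1..2*n})" by auto
  then have "(\<Sum>k\<in>{1..2*Suc n}. f k) = f (Suc (Suc (2*n))) + f (Suc (2*n)) + (\<Sum>k\<in>{1..2*n}. f k)"
    by simp
  moreover have "(\<Sum>i\<in>{1..Suc n}. (f (2*i-1) + f (2*i))) = (\<Sum>i\<in>{1..n}. (f (2*i-1) + f (2*i))) + (f (2*Suc n - 1) + f (2*Suc n))"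
    by simp
  ultimately show ?case using Suc.IH by simp
qed

theorem lemma1:
  fixes \<theta> :: real and p q :: "int \<Rightarrow> real" and n :: nat and y :: "nat \<Rightarrow> int" and \<eta> :: config
  assumes "0 \<le> \<theta>" "\<theta> \<le> 1"
    and "\<And>x. 0 \<le> p x" "\<And>x. 0 \<le> q x"
    and "\<exists>M. \<forall>x. p x \<le> M \<and> q x \<le> M"
    and "1 \<le> n"
    and "\<And>i. 1 \<le> i \<Longrightarrow> i < 2*n \<Longrightarrow> y i < y (Suc i)"
  shows "gen \<theta> p q (Sigma \<theta> n y) \<eta> = (\<Sum>i\<in>{1..2*n}. Lvar p q i (\<lambda>z. Sigma \<theta> n z \<eta>) y)"
proof -
  define a where "a i = y (2*i-1)" for i
  define b where "b i = y (2*i)" for i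
  define s where "s i \<eta>' = sigma \<theta> (a i) (b i) \<eta>'" for i \<eta>'
  define Pi where "Pi i = (\<Prod>j\<in>{1..n}-{i}. s j \<eta>)" for i
  define S where "S = {y 1..y (2*n)}"
  have Sig: "Sigma \<theta> n y \<eta>' = (\<Prod>i\<in>{1..n}. s i \<eta>')" for \<eta>'
    by (simp add: Sigma_def s_def a_def b_def)
  note mono = y_less[of "2*n" y, OF assms(7)]
  have ab: "a i < b i" if "i \<in> {1..n}" for i
    using mono[of "2*i-1" "2*i"] that unfolding a_def b_def by auto
  have disj: "b i < a j" if "i \<in> {1..n}" "j \<in> {1..n}" "i < j" for i j
    using mono[of "2*i" "2*j-1"] that unfolding a_def b_def by auto
  have le1: "y 1 \<le> a i" if "i \<in> {1..n}" for i
  proof (cases "i = 1")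
    case True then show ?thesis by (simp add: a_def)
  next
    case False
    then have "1 < 2*i-1" "2*i-1 \<le> 2*n" using that by auto
    then show ?thesis using mono[of 1 "2*i-1"] unfolding a_def by auto
  qed
  have le2: "b i \<le> y (2*n)" if "i \<in> {1..n}" for i
  proof (cases "i = n")
    case True then show ?thesis by (simp add: b_def)
  next
    case False then show ?thesis using mono[of "2*i" "2*n"] that unfolding b_def by auto
  qed
  have aS: "a i \<in> S" and bS: "b i \<in> S" if "i \<in> {1..n}" for i
    using le1[OF that] le2[OF that] ab[OF that] unfolding S_def by auto
  have uniq: "i = j" if "i \<in> {1..n}" "j \<in> {1..n}" "a i \<le> x \<and> x \<le> b i" "a j \<le> x \<and> x \<le> b j" for i j x
  proof (rule ccontr)
    assume "i \<noteq> j"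
    then have "i < j \<or> j < i" by auto
    then show False using disj that by fastforce
  qed
  define Cq where "Cq i x = (if x = a i then sigma \<theta> (a i + 1) (b i) \<eta> - s i \<eta> else 0)
     + (if x = b i then sigma \<theta> (a i) (b i + 1) \<eta> - s i \<eta> else 0)" for i x
  define Cp where "Cp i x = (if x = a i then sigma \<theta> (a i - 1) (b i) \<eta> - s i \<eta> else 0)
     + (if x = b i then sigma \<theta> (a i) (b i - 1) \<eta> - s i \<eta> else 0)" for i x
  have Qx: "\<theta> * Sigma \<theta> n y (etaA \<eta> x (x-1)) + (1-\<theta>) * Sigma \<theta> n y (etaC \<eta> x (x-1)) - Sigma \<theta> n y \<eta>
      = (\<Sum>i\<in>{1..n}. Pi i * Cq i x)" for x
  proof -
    have "\<theta> * (\<Prod>i\<in>{1..n}. s i (etaA \<eta> x (x-1))) + (1-\<theta>) * (\<Prod>i\<in>{1..n}. s i (etaC \<eta> x (x-1))) - (\<Prod>i\<in>{1..n}. s i \<eta>)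
      = (\<Sum>i\<in>{1..n}. (\<Prod>j\<in>{1..n}-{i}. s j \<eta>) * Cq i x)"
    proof (rule prod_combo[where P="\<lambda>j. a j \<le> x \<and> x \<le> b j" and A="{1..n}"
        and gA="\<lambda>i. s i (etaA \<eta> x (x-1))" and gB="\<lambda>i. s i (etaC \<eta> x (x-1))" and gZ="\<lambda>i. s i \<eta>"
        and D="\<lambda>i. Cq i x"])
      show "finite {1..n}" by simp
    next
      fix j assume j: "j \<in> {1..n}" "\<not> (a j \<le> x \<and> x \<le> b j)"
      have "cnt (etaA \<eta> x (x-1)) (a j) (b j) = cnt \<eta> (a j) (b j)"
        by (rule cnt_cong) (use j in \<open>auto simp: etaA_def\<close>)
      moreover have "cnt (etaC \<eta> x (x-1)) (a j) (b j) = cnt \<eta> (a j) (b j)"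
        by (rule cnt_cong) (use j in \<open>auto simp: etaC_def\<close>)
      ultimately show "s j (etaA \<eta> x (x-1)) = s j \<eta> \<and> s j (etaC \<eta> x (x-1)) = s j \<eta>"
        unfolding s_def sigma_def by simp
    next
      fix i j assume "i \<in> {1..n}" "j \<in> {1..n}" "a i \<le> x \<and> x \<le> b i" "a j \<le> x \<and> x \<le> b j"
      then show "i = j" by (rule uniq)
    next
      fix i assume i: "i \<in> {1..n}"
      show "\<theta> * s i (etaA \<eta> x (x-1)) + (1 - \<theta>) * s i (etaC \<eta> x (x-1)) - s i \<eta> = Cq i x"
        unfolding s_def Cq_def by (rule one_q[OF ab[OF i]])
    qed
    then show ?thesis unfolding Sig Pi_def .
  qed
  have Px: "\<theta> * Sigma \<theta> n y (etaA \<eta> (x-1) x) + (1-\<theta>) * Sigma \<theta> n y (etaC \<eta> (x-1) x) - Sigma \<theta> n y \<eta>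
      = (\<Sum>i\<in>{1..n}. Pi i * Cp i x)" for x
  proof -
    have "\<theta> * (\<Prod>i\<in>{1..n}. s i (etaA \<eta> (x-1) x)) + (1-\<theta>) * (\<Prod>i\<in>{1..n}. s i (etaC \<eta> (x-1) x)) - (\<Prod>i\<in>{1..n}. s i \<eta>)
      = (\<Sum>i\<in>{1..n}. (\<Prod>j\<in>{1..n}-{i}. s j \<eta>) * Cp i x)"
    proof (rule prod_combo[where P="\<lambda>j. a j \<le> x \<and> x \<le> b j" and A="{1..n}"
        and gA="\<lambda>i. s i (etaA \<eta> (x-1) x)" and gB="\<lambda>i. s i (etaC \<eta> (x-1) x)" and gZ="\<lambda>i. s i \<eta>"
        and D="\<lambda>i. Cp i x"])
      show "finite {1..n}" by simp
    next
      fix j assume j: "j \<in> {1..n}" "\<not> (a j \<le> x \<and> x \<le> b j)"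
      have "cnt (etaA \<eta> (x-1) x) (a j) (b j) = cnt \<eta> (a j) (b j)"
        by (rule cnt_cong) (use j in \<open>auto simp: etaA_def\<close>)
      moreover have "cnt (etaC \<eta> (x-1) x) (a j) (b j) = cnt \<eta> (a j) (b j)"
        by (rule cnt_cong) (use j in \<open>auto simp: etaC_def\<close>)
      ultimately show "s j (etaA \<eta> (x-1) x) = s j \<eta> \<and> s j (etaC \<eta> (x-1) x) = s j \<eta>"
        unfolding s_def sigma_def by simp
    next
      fix i j assume "i \<in> {1..n}" "j \<in> {1..n}" "a i \<le> x \<and> x \<le> b i" "a j \<le> x \<and> x \<le> b j"
      then show "i = j" by (rule uniq)
    next
      fix i assume i: "i \<in> {1..n}"
      show "\<theta> * s i (etaA \<eta> (x-1) x) + (1 - \<theta>) * s i (etaC \<eta> (x-1) x) - s i \<eta> = Cp i x"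
        unfolding s_def Cp_def by (rule one_p[OF ab[OF i]])
    qed
    then show ?thesis unfolding Sig Pi_def .
  qed
  have finS: "finite S" unfolding S_def by simp
  have infs: "(\<Sum>\<^sub>\<infinity>x\<in>UNIV. r x * (\<Sum>i\<in>{1..n}. Pi i * C i x))
      = (\<Sum>i\<in>{1..n}. Pi i * (r (a i) * (A i) + r (b i) * B i))"
    if C: "\<And>i x. C i x = (if x = a i then A i else 0) + (if x = b i then B i else 0)" for r C A B
  proof -
    have "(\<Sum>\<^sub>\<infinity>x\<in>UNIV. r x * (\<Sum>i\<in>{1..n}. Pi i * C i x)) = (\<Sum>\<^sub>\<infinity>x\<in>S. r x * (\<Sum>i\<in>{1..n}. Pi i * C i x))"
    proof (rule infsum_cong_neutral)
      fix x assume "x \<in> UNIV - S"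
      then have "x \<noteq> a i \<and> x \<noteq> b i" if "i \<in> {1..n}" for i using aS[OF that] bS[OF that] by auto
      then show "r x * (\<Sum>i\<in>{1..n}. Pi i * C i x) = 0" by (simp add: C)
    qed auto
    also have "\<dots> = (\<Sum>x\<in>S. r x * (\<Sum>i\<in>{1..n}. Pi i * C i x))" using finS by simp
    also have "\<dots> = (\<Sum>i\<in>{1..n}. \<Sum>x\<in>S. r x * (Pi i * C i x))"
      by (simp add: sum_distrib_left sum.swap[of _ S])
    also have "\<dots> = (\<Sum>i\<in>{1..n}. Pi i * (r (a i) * (A i) + r (b i) * B i))"
    proof (rule sum.cong[OF refl])
      fix i assume i: "i \<in> {1..n}"
      have "(\<Sum>x\<in>S. r x * (Pi i * C i x)) = (\<Sum>x\<in>S. (if x = a i then Pi i * r (a i) * A i else 0)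
          + (if x = b i then Pi i * r (b i) * B i else 0))"
        by (rule sum.cong[OF refl]) (auto simp: C algebra_simps)
      also have "\<dots> = Pi i * r (a i) * A i + Pi i * r (b i) * B i"
        using finS aS[OF i] bS[OF i] by (simp add: sum.distrib)
      finally show "(\<Sum>x\<in>S. r x * (Pi i * C i x)) = Pi i * (r (a i) * (A i) + r (b i) * B i)"
        by (simp add: algebra_simps)
    qed
    finally show ?thesis .
  qed
  have L: "gen \<theta> p q (Sigma \<theta> n y) \<eta> =
     (\<Sum>i\<in>{1..n}. Pi i * (q (a i) * (sigma \<theta> (a i + 1) (b i) \<eta> - s i \<eta>) + q (b i) * (sigma \<theta> (a i) (b i + 1) \<eta> - s i \<eta>)))
   + (\<Sum>i\<in>{1..n}. Pi i * (p (a i) * (sigma \<theta> (a i - 1) (b i) \<eta> - s i \<eta>) + p (b i) * (sigma \<theta> (a i) (b i - 1) \<eta> - s i \<eta>)))"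
    unfolding gen_def Qx Px
    by (rule arg_cong2[where f="(+)"]; rule infs) (simp_all add: Cq_def Cp_def)
  have chg: "Sigma \<theta> n (y(k := v)) \<eta> - Sigma \<theta> n y \<eta> = Pi i * (sigma \<theta> ((y(k:=v)) (2*i-1)) ((y(k:=v)) (2*i)) \<eta> - s i \<eta>)"
    if i: "i \<in> {1..n}" and k: "k = 2*i-1 \<or> k = 2*i" for i k v
    unfolding Sigma_def Pi_def s_def a_def b_def
    by (rule prod_change1) (use i k in auto)
  have R: "Lvar p q (2*i-1) (\<lambda>z. Sigma \<theta> n z \<eta>) y + Lvar p q (2*i) (\<lambda>z. Sigma \<theta> n z \<eta>) y
    = Pi i * (q (a i) * (sigma \<theta> (a i + 1) (b i) \<eta> - s i \<eta>) + q (b i) * (sigma \<theta> (a i) (b i + 1) \<eta> - s i \<eta>))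
     + Pi i * (p (a i) * (sigma \<theta> (a i - 1) (b i) \<eta> - s i \<eta>) + p (b i) * (sigma \<theta> (a i) (b i - 1) \<eta> - s i \<eta>))"
    if i: "i \<in> {1..n}" for i
  proof -
    have k1: "2*i-1 \<noteq> 2*i" using i by auto
    have ya: "y (2*i-1) = a i" and yb: "y (2*i) = b i" by (simp_all add: a_def b_def)
    have d1: "Sigma \<theta> n (y(2*i-1 := a i + 1)) \<eta> - Sigma \<theta> n y \<eta> = Pi i * (sigma \<theta> (a i + 1) (b i) \<eta> - s i \<eta>)"
      using chg[OF i, of "2*i-1" "a i + 1"] k1 by (simp add: yb)
    have d2: "Sigma \<theta> n (y(2*i-1 := a i - 1)) \<eta> - Sigma \<theta> n y \<eta> = Pi i * (sigma \<theta> (a i - 1) (b i) \<eta> - s i \<eta>)"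
      using chg[OF i, of "2*i-1" "a i - 1"] k1 by (simp add: yb)
    have d3: "Sigma \<theta> n (y(2*i := b i + 1)) \<eta> - Sigma \<theta> n y \<eta> = Pi i * (sigma \<theta> (a i) (b i + 1) \<eta> - s i \<eta>)"
      using chg[OF i, of "2*i" "b i + 1"] k1 by (simp add: a_def)
    have d4: "Sigma \<theta> n (y(2*i := b i - 1)) \<eta> - Sigma \<theta> n y \<eta> = Pi i * (sigma \<theta> (a i) (b i - 1) \<eta> - s i \<eta>)"
      using chg[OF i, of "2*i" "b i - 1"] k1 by (simp add: a_def)
    show ?thesis
      by (simp only: Lvar_def ya yb d1 d2 d3 d4) (simp add: algebra_simps)
  qed
  show ?thesis unfolding L sum_pairs sum.distrib[symmetric]
    by (rule sum.cong[OF refl], rule R[symmetric])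
qed

end
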